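(* Let $\theta\in(0,\pi/4)$ and $|\Psi\rangle=\sin\theta|00\rangle+\cos\theta|11\rangle$ on system qubits $1,2$. Let $|\varphi_\pm\rangle=\cos\theta|0\rangle\mp\sin\theta|1\rangle$, and $$\Omega_1=|00\rangle\langle00|+|11\rangle\langle11|,\quad \Omega_2=\mathbb 1-|{+}\rangle\langle{+}|\otimes|\varphi_+\rangle\langle\varphi_+|,\quad \Omega_3=\mathbb 1-|{-}\rangle\langle{-}|\otimes|\varphi_-\rangle\langle\varphi_-|.$$ Let $R_2=H\otimes\begin{pmatrix}\cos\theta&-\sin\theta\\ \sin\theta&\cos\theta\end{pmatrix}$ and $R_3=XH\otimes\begin{pmatrix}\cos\theta&\sin\theta\\ -\sin\theta&\cos\theta\end{pmatrix}$. Define, with ancilla qubits $a_1,a_2,a_3$, $$\mathcal M_1=(\mathbb 1\otimes|0\rangle\langle0|_{a_1})\mathcal C_{X1a_1}\mathcal C_{X2a_1},$$ $$\mathcal M^t_i=(\mathbb 1\otimes|0\rangle\langle0|_{a_i})(R_i^\dagger\otimes\mathbb 1)(X\otimes X\otimes\mathbb 1)\,\mathcal C^2_{X12a_i}\,(X\otimes X\otimes\mathbb 1)(R_i\otimes\mathbb 1),\quad i=2,3.$$ Then $\mathcal M^t_i(\sigma\otimes|0\rangle\langle0|_{a_i})=\Omega_i\sigma\otimes|0\rangle\langle0|_{a_i}$ for $i=2,3$, $\Omega_1\Omega_2\Omega_3=|\Psi\rangle\langle\Psi|$, and hence for every two-qubit operator $\sigma$, $$\mathcal M_1\mathcal M^t_2\mathcal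 M^t_3\big(\sigma\otimes|000\rangle\langle000|\big)=|\Psi\rangle\langle\Psi|\sigma\otimes|000\rangle\langle000|.$$ Furthermore, for $i=2,3$, the two-ancilla operator $\mathcal M^b_i=\mathbb 1-(\mathbb 1\otimes|00\rangle\langle00|_{aa'})(R_i^\dagger\otimes\mathbb 1)\mathcal C_{X1a}\mathcal C_{X2a'}(R_i\otimes\mathbb 1)$ satisfies $\mathcal M^b_i(\sigma\otimes|00\rangle\langle00|_{aa'})=\Omega_i\sigma\otimes|00\rangle\langle00|_{aa'}$, so replacing each $\mathcal M^t_i$ by $\mathcal M^b_i$ (with fresh ancilla pairs) yields the same action on inputs with all ancillas in $|0\rangle$.
   Context: $|\pm\rangle=(|0\rangle\pm|1\rangle)/\sqrt2$; $H$ is the Hadamard gate, $X$ is Pauli-$X$. $\mathcal C_{Xja}$ is the CNOT gate with control system qubit $j$ and target ancilla $a$; $\mathcal C^2_{X12a}$ is the Toffoli gate with controls system qubits $1,2$ and target $a$ (flips $a$ iff both controls are $|1\rangle$). All operators are extended by the identity on qubits they do not act on; $\sigma$ is any operator on the two system qubits. *)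

theory Defs
  imports Complex_Main "Jordan_Normal_Form.Matrix"
begin

(* An operator on an n-qubit register is a complex 2^n x 2^n matrix.
   Computational basis index x (0 <= x < 2^n) is big-endian: qubit k (0-based,
   k = 0 is the leftmost tensor factor) carries the bit (x div 2^(n-1-k)) mod 2.
   The Kronecker product kron A B puts A on the leading (leftmost) qubits, which
   is consistent with this bit convention. *)

definition kron :: "complex mat \<Rightarrow> complex mat \<Rightarrow> complex mat" where
  "kron A B = mat (dim_row A * dim_row B) (dim_col A * dim_col B)
     (\<lambda>(i,j). A $$ (i div dim_row B, j div dim_col B) * B $$ (i mod dim_row B, j mod dim_col B))"

definition dagger :: "complex mat \<Rightarrow> complex mat" where
  "dagger A = mat (dim_col A) (dim_row A) (\<lambda>(i,j). cnj (A $$ (j,i)))"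

definition outer :: "complex vec \<Rightarrow> complex vec \<Rightarrow> complex mat" where
  "outer u v = mat (dim_vec u) (dim_vec v) (\<lambda>(i,j). u $ i * cnj (v $ j))"

definition vkron :: "complex vec \<Rightarrow> complex vec \<Rightarrow> complex vec" where
  "vkron u v = vec (dim_vec u * dim_vec v) (\<lambda>i. u $ (i div dim_vec v) * v $ (i mod dim_vec v))"

definition ket0 :: "complex vec" where "ket0 = vec_of_list [1, 0]"
definition ket1 :: "complex vec" where "ket1 = vec_of_list [0, 1]"
definition ketp :: "complex vec" where "ketp = vec_of_list [1 / sqrt 2, 1 / sqrt 2]"
definition ketm :: "complex vec" where "ketm = vec_of_list [1 / sqrt 2, - 1 / sqrt 2]"

definition hadamard :: "complex mat" where
  "hadamard = mat_of_rows_list 2 [[1 / sqrt 2, 1 / sqrt 2], [1 / sqrt 2, - 1 / sqrt 2]]"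
definition pauliX :: "complex mat" where
  "pauliX = mat_of_rows_list 2 [[0, 1], [1, 0]]"

definition qbit :: "nat \<Rightarrow> nat \<Rightarrow> nat \<Rightarrow> nat" where
  "qbit n k x = (x div 2 ^ (n - 1 - k)) mod 2"

definition flipq :: "nat \<Rightarrow> nat \<Rightarrow> nat \<Rightarrow> nat" where
  "flipq n t x = (if qbit n t x = 0 then x + 2 ^ (n - 1 - t) else x - 2 ^ (n - 1 - t))"

definition cnot :: "nat \<Rightarrow> nat \<Rightarrow> nat \<Rightarrow> complex mat" where
  "cnot n c t = mat (2^n) (2^n)
     (\<lambda>(i,j). if i = (if qbit n c j = 1 then flipq n t j else j) then 1 else 0)"

definition toffoli :: "nat \<Rightarrow> nat \<Rightarrow> nat \<Rightarrow> nat \<Rightarrow> complex mat" where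
  "toffoli n c1 c2 t = mat (2^n) (2^n)
     (\<lambda>(i,j). if i = (if qbit n c1 j = 1 \<and> qbit n c2 j = 1 then flipq n t j else j) then 1 else 0)"

definition proj0q :: "nat \<Rightarrow> nat \<Rightarrow> complex mat" where
  "proj0q n k = mat (2^n) (2^n) (\<lambda>(i,j). if i = j \<and> qbit n k j = 0 then 1 else 0)"

definition proj_zeros :: "nat \<Rightarrow> complex mat" where
  "proj_zeros m = mat (2^m) (2^m) (\<lambda>(i,j). if i = 0 \<and> j = 0 then 1 else 0)"

definition onsys :: "nat \<Rightarrow> complex mat \<Rightarrow> complex mat" where
  "onsys n A = kron A (1\<^sub>m (2 ^ (n - 2)))"

definition rotm :: "real \<Rightarrow> complex mat" where
  "rotm \<theta> = mat_of_rows_list 2 [[cos \<theta>, - sin \<theta>], [sin \<theta>, cos \<theta>]]"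

definition Psi :: "real \<Rightarrow> complex vec" where
  "Psi \<theta> = sin \<theta> \<cdot>\<^sub>v vkron ket0 ket0 + cos \<theta> \<cdot>\<^sub>v vkron ket1 ket1"

definition phip :: "real \<Rightarrow> complex vec" where
  "phip \<theta> = cos \<theta> \<cdot>\<^sub>v ket0 - sin \<theta> \<cdot>\<^sub>v ket1"
definition phim :: "real \<Rightarrow> complex vec" where
  "phim \<theta> = cos \<theta> \<cdot>\<^sub>v ket0 + sin \<theta> \<cdot>\<^sub>v ket1"

definition Omega1 :: "complex mat" where
  "Omega1 = outer (vkron ket0 ket0) (vkron ket0 ket0) + outer (vkron ket1 ket1) (vkron ket1 ket1)"
definition Omega2 :: "real \<Rightarrow> complex mat" where
  "Omega2 \<theta> = 1\<^sub>m 4 - kron (outer ketp ketp) (outer (phip \<theta>) (phip \<theta>))"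
definition Omega3 :: "real \<Rightarrow> complex mat" where
  "Omega3 \<theta> = 1\<^sub>m 4 - kron (outer ketm ketm) (outer (phim \<theta>) (phim \<theta>))"

definition R2 :: "real \<Rightarrow> complex mat" where
  "R2 \<theta> = kron hadamard (rotm \<theta>)"
definition R3 :: "real \<Rightarrow> complex mat" where
  "R3 \<theta> = kron (pauliX * hadamard) (mat_of_rows_list 2 [[cos \<theta>, sin \<theta>], [- sin \<theta>, cos \<theta>]])"

definition M1 :: "nat \<Rightarrow> nat \<Rightarrow> complex mat" where
  "M1 n a = proj0q n a * cnot n 0 a * cnot n 1 a"

definition Mt :: "nat \<Rightarrow> complex mat \<Rightarrow> nat \<Rightarrow> complex mat" where
  "Mt n R a = proj0q n a * onsys n (dagger R) * onsys n (kron pauliX pauliX)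
      * toffoli n 0 1 a * onsys n (kron pauliX pauliX) * onsys n R"

definition Mb :: "nat \<Rightarrow> complex mat \<Rightarrow> nat \<Rightarrow> nat \<Rightarrow> complex mat" where
  "Mb n R a a' = 1\<^sub>m (2^n) - proj0q n a * proj0q n a' * onsys n (dagger R)
      * cnot n 0 a * cnot n 1 a' * onsys n R"

end

theory Submission
  imports Defs
begin


lemma sum_lessThan_add: "(\<Sum>k<m+(n::nat). f k) = (\<Sum>k<m. f k) + (\<Sum>k<n. f (m+k))"
  by (induction n) (simp_all add: add.assoc)

lemma sum_split_mult: "(\<Sum>k<p*(q::nat). f k) = (\<Sum>a<p. \<Sum>b<q. f (a*q+b))"
proof (induction p)
  case 0 then show ?case by simp
next
  case (Suc p)
  have "(\<Sum>k<Suc p*q. f k) = (\<Sum>k<p*q + q. f k)" by (simp add: add.commute)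
  also have "\<dots> = (\<Sum>k<p*q. f k) + (\<Sum>b<q. f (p*q+b))" by (rule sum_lessThan_add)
  finally show ?case using Suc by simp
qed

lemma dim_kron[simp]: "dim_row (kron A B) = dim_row A * dim_row B" "dim_col (kron A B) = dim_col A * dim_col B"
  by (simp_all add: kron_def)
lemma kron_carrier[simp]: "A \<in> carrier_mat a b \<Longrightarrow> B \<in> carrier_mat c d \<Longrightarrow> kron A B \<in> carrier_mat (a*c) (b*d)"
  unfolding carrier_mat_def by simp
lemma index_kron: "i < dim_row A * dim_row B \<Longrightarrow> j < dim_col A * dim_col B \<Longrightarrow>
   kron A B $$ (i,j) = A $$ (i div dim_row B, j div dim_col B) * B $$ (i mod dim_row B, j mod dim_col B)"
  by (simp add: kron_def)

lemma kron_mult: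
  assumes "dim_col A = dim_row C" "dim_col B = dim_row D"
  shows "kron A B * kron C D = kron (A*C) (B*D)"
proof (rule eq_matI)
  fix i j assume i: "i < dim_row (kron (A*C) (B*D))" and j: "j < dim_col (kron (A*C) (B*D))"
  let ?b = "dim_row B" and ?d = "dim_col D" and ?p = "dim_col A" and ?q = "dim_col B"
  have i': "i < dim_row A * ?b" and j': "j < dim_col C * ?d" using i j by auto
  have bpos: "?b > 0" using i' by (cases "?b = 0") auto
  have dpos: "?d > 0" using j' by (cases "?d = 0") auto
  have idiv: "i div ?b < dim_row A" using i' by (simp add: less_mult_imp_div_less)
  have jdiv: "j div ?d < dim_col C" using j' by (simp add: less_mult_imp_div_less)
  have "(kron A B * kron C D) $$ (i,j) = (\<Sum>k<?p*?q. kron A B $$ (i,k) * kron C D $$ (k,j))"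
    using i' j' assms by (simp add: scalar_prod_def atLeast0LessThan row_def col_def)
  also have "\<dots> = (\<Sum>x<?p. \<Sum>y<?q. kron A B $$ (i,x*?q+y) * kron C D $$ (x*?q+y,j))"
    by (simp only: sum_split_mult)
  also have "\<dots> = (\<Sum>x<?p. \<Sum>y<?q. (A $$ (i div ?b, x) * C $$ (x, j div ?d)) * (B $$ (i mod ?b, y) * D $$ (y, j mod ?d)))"
  proof (intro sum.cong refl)
    fix x y assume x: "x \<in> {..<?p}" and y: "y \<in> {..<?q}"
    have xy: "x*?q+y < ?p * ?q"
    proof -
      have "x*?q+y < x*?q+?q" using y by simp
      also have "\<dots> = Suc x * ?q" by simp
      also have "\<dots> \<le> ?p*?q" using x by (intro mult_le_mono1) simp
      finally show ?thesis .
    qed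
    have d1: "(x*?q+y) div ?q = x" "(x*?q+y) mod ?q = y" using y by auto
    show "kron A B $$ (i,x*?q+y) * kron C D $$ (x*?q+y,j) = (A $$ (i div ?b, x) * C $$ (x, j div ?d)) * (B $$ (i mod ?b, y) * D $$ (y, j mod ?d))"
      using i' j' xy d1 assms by (simp add: index_kron mult_ac)
  qed
  also have "\<dots> = (\<Sum>x<?p. A $$ (i div ?b, x) * C $$ (x, j div ?d)) * (\<Sum>y<?q. B $$ (i mod ?b, y) * D $$ (y, j mod ?d))"
    by (simp only: sum_product)
  also have "\<dots> = kron (A*C) (B*D) $$ (i,j)"
    using i' j' idiv jdiv bpos dpos assms
    by (simp add: index_kron scalar_prod_def atLeast0LessThan row_def col_def)
  finally show "(kron A B * kron C D) $$ (i,j) = kron (A*C) (B*D) $$ (i,j)" .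
qed simp_all

lemma qbit_lo: assumes "k < m" shows "qbit (Suc (Suc m)) (Suc (Suc k)) x = qbit m k (x mod 2^m)"
proof -
  define e where "e = m - 1 - k"
  have e1: "Suc e \<le> m" using assms by (simp add: e_def)
  have "x div 2^e mod 2 = x mod 2^(e+1) div 2^e" using div_exp_mod_exp_eq[of x e 1] by simp
  moreover have "(x mod 2^m) div 2^e mod 2 = x mod 2^m mod 2^(e+1) div 2^e"
    using div_exp_mod_exp_eq[of "x mod 2^m" e 1] by simp
  moreover have "x mod 2^m mod 2^(e+1) = x mod (2::nat)^(e+1)"
  proof -
    have "(2::nat)^(e+1) dvd 2^m" using le_imp_power_dvd[of "e+1" m 2] e1 by simp
    thus ?thesis by (rule mod_mod_cancel)
  qed
  ultimately show ?thesis unfolding qbit_def e_def by simp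
qed

lemma qbit_hi1: "qbit (Suc (Suc m)) 1 x = x div 2^m mod 2"
  unfolding qbit_def by simp

lemma qbit_hi0: assumes "x < 2^(Suc (Suc m))" shows "qbit (Suc (Suc m)) 0 x = x div 2^m div 2"
proof -
  have "x div 2^m < 4" using assms by (simp add: less_mult_imp_div_less)
  hence "x div 2^m div 2 < 2" by simp
  moreover have "x div 2^(Suc m) = x div 2^m div 2" by (metis div_mult2_eq power_Suc2)
  ultimately show ?thesis unfolding qbit_def by simp
qed

lemma flip_up_lt: assumes "r < 2^m" "k < m" "qbit m k r = 0" shows "r + 2^(m-1-k) < (2::nat)^m"
proof -
  define e where "e = m - 1 - k"
  have m: "m = (m - Suc e) + Suc e" using assms(2) by (simp add: e_def)
  define q where "q = r div 2^(Suc e)"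
  define A where "A = r mod 2^(Suc e)"
  have r: "r = q * 2^(Suc e) + A" unfolding q_def A_def by (rule div_mult_mod_eq[symmetric])
  have "A div 2^e = r div 2^e mod 2" using div_exp_mod_exp_eq[of r e 1] by (simp add: A_def)
  hence "A div 2^e = 0" using assms(3) by (simp add: qbit_def e_def)
  hence A: "A < 2^e" by (simp add: div_eq_0_iff)
  have "r < 2^(m - Suc e) * 2^(Suc e)" using assms(1) m by (metis power_add)
  hence "q < 2^(m - Suc e)" by (simp add: q_def less_mult_imp_div_less)
  hence "Suc q * 2^(Suc e) \<le> 2^(m - Suc e) * 2^(Suc e)" by (intro mult_le_mono1) simp
  also have "\<dots> = 2^m" using m by (metis power_add)
  finally have "Suc q * 2^(Suc e) \<le> 2^m" .
  moreover have "r + 2^e < Suc q * 2^(Suc e)" using r A by simp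
  ultimately show ?thesis by (simp add: e_def)
qed

lemma flip_down_ge: assumes "qbit m k r \<noteq> 0" shows "(2::nat)^(m-1-k) \<le> r"
proof (rule ccontr)
  assume "\<not> ?thesis" hence "r div 2^(m-1-k) = 0" by simp
  thus False using assms by (simp add: qbit_def)
qed

lemma flipq_lt: assumes "r < 2^m" "k < m" shows "flipq m k r < 2^m"
  using flip_up_lt[OF assms] assms(1) unfolding flipq_def by auto

lemma flipq_lo: assumes "k < m"
  shows "flipq (Suc (Suc m)) (Suc (Suc k)) x = x div 2^m * 2^m + flipq m k (x mod 2^m)"
proof -
  have q: "qbit (Suc (Suc m)) (Suc (Suc k)) x = qbit m k (x mod 2^m)" by (rule qbit_lo[OF assms])
  have e: "Suc (Suc m) - 1 - Suc (Suc k) = m - 1 - k" by simp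
  have x: "x = x div 2^m * 2^m + x mod 2^m" by (rule div_mult_mod_eq[symmetric])
  show ?thesis
  proof (cases "qbit m k (x mod 2^m) = 0")
    case True thus ?thesis unfolding flipq_def q e by (subst x) simp
  next
    case False
    hence "2^(m-1-k) \<le> x mod 2^m" by (rule flip_down_ge)
    thus ?thesis using False unfolding flipq_def q e by (subst (1) x) simp
  qed
qed

definition dg4 :: "(nat \<Rightarrow> bool) \<Rightarrow> complex mat" where
  "dg4 P = mat 4 4 (\<lambda>(i,j). if i = j \<and> P i then 1 else 0)"
definition flipmat :: "nat \<Rightarrow> nat \<Rightarrow> complex mat" where
  "flipmat m k = mat (2^m) (2^m) (\<lambda>(i,j). if i = flipq m k j then 1 else 0)"
definition ketbra :: "nat \<Rightarrow> nat \<Rightarrow> complex mat" where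
  "ketbra m x = mat (2^m) (2^m) (\<lambda>(i,j). if i = x \<and> j = 0 then 1 else 0)"

lemma dims_atoms[simp]:
  "dim_row (dg4 P) = 4" "dim_col (dg4 P) = 4"
  "dim_row (flipmat m k) = 2^m" "dim_col (flipmat m k) = 2^m"
  "dim_row (ketbra m x) = 2^m" "dim_col (ketbra m x) = 2^m"
  "dim_row (proj0q m k) = 2^m" "dim_col (proj0q m k) = 2^m"
  by (simp_all add: dg4_def flipmat_def ketbra_def proj0q_def)

lemma proj_zeros_ketbra: "proj_zeros m = ketbra m 0"
  by (simp add: proj_zeros_def ketbra_def)

lemma split_eq:
  fixes i j N :: nat
  assumes "f < N"
  shows "(i = j div N * N + f) \<longleftrightarrow> (i div N = j div N \<and> i mod N = f)"
proof
  assume "i = j div N * N + f" thus "i div N = j div N \<and> i mod N = f" using assms by simp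
next
  assume "i div N = j div N \<and> i mod N = f"
  thus "i = j div N * N + f" by (metis div_mult_mod_eq)
qed

lemma ctrl_decomp:
  assumes km: "k < m" and C: "\<And>j. j < 2^Suc (Suc m) \<Longrightarrow> C j \<longleftrightarrow> P (j div 2^m)"
  shows "mat (2^Suc (Suc m)) (2^Suc (Suc m)) (\<lambda>(i,j). if i = (if C j then flipq (Suc (Suc m)) (Suc (Suc k)) j else j) then 1 else 0)
     = kron (dg4 (\<lambda>s. \<not> P s)) (1\<^sub>m (2^m)) + kron (dg4 P) (flipmat m k)"
    (is "?L = ?R")
proof (rule eq_matI)
  fix i j assume i: "i < dim_row ?R" and j: "j < dim_col ?R"
  let ?N = "2^m :: nat"
  have i4: "i < 4 * ?N" and j4: "j < 4 * ?N" using i j by auto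
  have N: "?N > 0" by simp
  have si: "i div ?N < 4" and sj: "j div ?N < 4" using i4 j4 by (auto simp: less_mult_imp_div_less)
  have ri: "i mod ?N < ?N" and rj: "j mod ?N < ?N" by auto
  have fl: "flipq m k (j mod ?N) < ?N" using flipq_lt[OF rj km] .
  have jn: "j < 2^Suc (Suc m)" using j4 by simp
  have in': "i < 2^Suc (Suc m)" using i4 by simp
  have ij: "(i = j) \<longleftrightarrow> (i div ?N = j div ?N \<and> i mod ?N = j mod ?N)"
    by (metis div_mult_mod_eq)
  have R: "?R $$ (i,j) = (if i div ?N = j div ?N \<and> \<not> P (j div ?N) then 1 else 0) * (if i mod ?N = j mod ?N then 1 else 0)
       + (if i div ?N = j div ?N \<and> P (j div ?N) then 1 else 0) * (if i mod ?N = flipq m k (j mod ?N) then 1 else 0)"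
    using i4 j4 si sj ri rj by (simp add: index_kron dg4_def flipmat_def)
  show "?L $$ (i,j) = ?R $$ (i,j)"
  proof (cases "P (j div ?N)")
    case True
    hence "?L $$ (i,j) = (if i = j div ?N * ?N + flipq m k (j mod ?N) then 1 else 0)"
      using C[OF jn] jn in' flipq_lo[OF km, of j] by simp
    thus ?thesis unfolding R using True split_eq[OF fl, of i j] by auto
  next
    case False
    hence "?L $$ (i,j) = (if i = j then 1 else 0)"
      using C[OF jn] jn in' by simp
    thus ?thesis unfolding R using False ij by auto
  qed
qed auto

lemma proj0q_decomp:
  assumes km: "k < m"
  shows "proj0q (Suc (Suc m)) (Suc (Suc k)) = kron (1\<^sub>m 4) (proj0q m k)" (is "?L = ?R")
proof (rule eq_matI)
  fix i j assume i: "i < dim_row ?R" and j: "j < dim_col ?R"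
  let ?N = "2^m :: nat"
  have i4: "i < 4 * ?N" and j4: "j < 4 * ?N" using i j by auto
  have si: "i div ?N < 4" and sj: "j div ?N < 4" using i4 j4 by (auto simp: less_mult_imp_div_less)
  have ri: "i mod ?N < ?N" and rj: "j mod ?N < ?N" by auto
  have ij: "(i = j) \<longleftrightarrow> (i div ?N = j div ?N \<and> i mod ?N = j mod ?N)"
    by (metis div_mult_mod_eq)
  show "?L $$ (i,j) = ?R $$ (i,j)"
    using i4 j4 si sj ri rj qbit_lo[OF km, of j] ij by (simp add: index_kron proj0q_def)
qed (auto simp: proj0q_def)


lemma toffoli_decomp: assumes "k < m"
  shows "toffoli (Suc (Suc m)) 0 1 (Suc (Suc k)) = kron (dg4 (\<lambda>s. s \<noteq> 3)) (1\<^sub>m (2^m)) + kron (dg4 (\<lambda>s. s = 3)) (flipmat m k)"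
  unfolding toffoli_def
proof (rule ctrl_decomp[OF assms])
  fix j :: nat assume j: "j < 2^Suc (Suc m)"
  have "j div 2^m < 4" using j by (simp add: less_mult_imp_div_less)
  hence "j div 2^m = 0 \<or> j div 2^m = 1 \<or> j div 2^m = 2 \<or> j div 2^m = 3" by arith
  thus "(qbit (Suc (Suc m)) 0 j = 1 \<and> qbit (Suc (Suc m)) 1 j = 1) \<longleftrightarrow> j div 2^m = 3"
    unfolding qbit_hi0[OF j] qbit_hi1 by auto
qed

lemma cnot0_decomp: assumes "k < m"
  shows "cnot (Suc (Suc m)) 0 (Suc (Suc k)) = kron (dg4 (\<lambda>s. s div 2 \<noteq> 1)) (1\<^sub>m (2^m)) + kron (dg4 (\<lambda>s. s div 2 = 1)) (flipmat m k)"
  unfolding cnot_def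
proof (rule ctrl_decomp[OF assms])
  fix j :: nat assume j: "j < 2^Suc (Suc m)"
  show "(qbit (Suc (Suc m)) 0 j = 1) \<longleftrightarrow> j div 2^m div 2 = 1"
    unfolding qbit_hi0[OF j] ..
qed

lemma cnot1_decomp: assumes "k < m"
  shows "cnot (Suc (Suc m)) 1 (Suc (Suc k)) = kron (dg4 (\<lambda>s. s mod 2 \<noteq> 1)) (1\<^sub>m (2^m)) + kron (dg4 (\<lambda>s. s mod 2 = 1)) (flipmat m k)"
  unfolding cnot_def
proof (rule ctrl_decomp[OF assms])
  fix j :: nat assume j: "j < 2^Suc (Suc m)"
  show "(qbit (Suc (Suc m)) 1 j = 1) \<longleftrightarrow> j div 2^m mod 2 = 1"
    unfolding qbit_hi1 ..
qed

lemma flip_ketbra: assumes "x < 2^m" "k < m"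
  shows "flipmat m k * ketbra m x = ketbra m (flipq m k x)" (is "?L = ?R")
proof (rule eq_matI)
  fix i j assume i: "i < dim_row ?R" and j: "j < dim_col ?R"
  have "?L $$ (i,j) = (\<Sum>l<2^m. (if i = flipq m k l then 1 else 0) * (if l = x \<and> j = 0 then 1 else 0))"
    using i j by (simp add: flipmat_def ketbra_def scalar_prod_def atLeast0LessThan row_def col_def)
  also have "\<dots> = (\<Sum>l<2^m. if l = x then (if i = flipq m k x \<and> j = 0 then 1 else 0) else 0)"
    by (intro sum.cong refl) auto
  also have "\<dots> = ?R $$ (i,j)" using assms i j by (simp add: ketbra_def)
  finally show "?L $$ (i,j) = ?R $$ (i,j)" .
qed (simp_all only: index_mult_mat dims_atoms)

lemma proj0q_ketbra: assumes "x < 2^m"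
  shows "proj0q m k * ketbra m x = (if qbit m k x = 0 then ketbra m x else 0\<^sub>m (2^m) (2^m))" (is "?L = ?R")
proof (rule eq_matI)
  fix i j assume i0: "i < dim_row ?R" and j0: "j < dim_col ?R"
  have i: "i < 2^m" and j: "j < 2^m" using i0 j0 by (auto split: if_splits)
  have "?L $$ (i,j) = (\<Sum>l<2^m. (if i = l \<and> qbit m k l = 0 then 1 else 0) * (if l = x \<and> j = 0 then 1 else 0))"
    using i j by (simp add: proj0q_def ketbra_def scalar_prod_def atLeast0LessThan row_def col_def)
  also have "\<dots> = (\<Sum>l<2^m. if l = x then (if i = x \<and> qbit m k x = 0 \<and> j = 0 then 1 else 0) else 0)"
    by (intro sum.cong refl) auto
  also have "\<dots> = ?R $$ (i,j)" using assms i j by (simp add: ketbra_def)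
  finally show "?L $$ (i,j) = ?R $$ (i,j)" .
qed simp_all

lemma one_ketbra: "1\<^sub>m (2^m) * ketbra m x = ketbra m x"
  by (rule left_mult_one_mat) (rule carrier_matI; simp)

lemma cI: "dim_row A = r \<Longrightarrow> dim_col A = c \<Longrightarrow> A \<in> carrier_mat r c" by (rule carrier_matI)

lemma add_mult_distrib': assumes "dim_row A = dim_row B" "dim_col A = dim_col B" "dim_col A = dim_row C"
  shows "(A + B) * C = A * C + B * (C :: complex mat)"
  by (rule add_mult_distrib_mat[OF cI[OF refl refl] cI[OF assms(1)[symmetric] assms(2)[symmetric]] cI[OF assms(3)[symmetric] refl]])

lemma mult_add_distrib': assumes "dim_row B = dim_row C" "dim_col B = dim_col C" "dim_col A = dim_row B"
  shows "A * (B + C) = A * B + A * (C :: complex mat)"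
proof -
  have e: "dim_row C = dim_col A" using assms(1,3) by (rule_tac trans[OF sym sym])
  show ?thesis
    by (rule mult_add_distrib_mat[OF cI[OF refl refl] cI[OF assms(3)[symmetric] refl] cI[OF e assms(2)[symmetric]]])
qed

lemma assoc': assumes "dim_col A = dim_row B" "dim_col B = dim_row C"
  shows "(A * B) * C = A * (B * (C :: complex mat))"
  by (rule assoc_mult_mat[OF cI[OF refl refl] cI[OF assms(1)[symmetric] refl] cI[OF assms(2)[symmetric] refl]])

lemma add_zero_right': "dim_row A = r \<Longrightarrow> dim_col A = c \<Longrightarrow> A + 0\<^sub>m r c = (A :: complex mat)"
  by (rule right_add_zero_mat) (rule cI)

lemma kron_zero_right: "kron A (0\<^sub>m r c) = 0\<^sub>m (dim_row A * r) (dim_col A * c)"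
proof (rule eq_matI)
  fix i j assume i: "i < dim_row (0\<^sub>m (dim_row A * r) (dim_col A * c) :: complex mat)"
    and j: "j < dim_col (0\<^sub>m (dim_row A * r) (dim_col A * c) :: complex mat)"
  have r: "r > 0" using i by (cases r) auto
  have c: "c > 0" using j by (cases c) auto
  show "kron A (0\<^sub>m r c) $$ (i,j) = 0\<^sub>m (dim_row A * r) (dim_col A * c) $$ (i,j)"
    using i j r c by (simp add: index_kron)
qed simp_all

lemma qbit_zero[simp]: "qbit m k 0 = 0" by (simp add: qbit_def)


lemma G1: assumes "A \<in> carrier_mat 4 4" "B \<in> carrier_mat 4 4" "W \<in> carrier_mat N N"
  shows "kron A (1\<^sub>m N) * kron B W = kron (A * B) W"
  using assms by (simp add: kron_mult)

lemma G2: assumes "A \<in> carrier_mat 4 4" "B1 \<in> carrier_mat 4 4" "B2 \<in> carrier_mat 4 4"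
  "W1 \<in> carrier_mat N N" "W2 \<in> carrier_mat N N" "V \<in> carrier_mat N N"
  shows "kron A V * (kron B1 W1 + kron B2 W2) = kron (A * B1) (V * W1) + kron (A * B2) (V * W2)"
proof -
  have "kron A V * (kron B1 W1 + kron B2 W2) = kron A V * kron B1 W1 + kron A V * kron B2 W2"
    by (rule mult_add_distrib_mat[of _ "4*N" "4*N" _ "4*N"]) (use assms in simp_all)
  also have "\<dots> = kron (A * B1) (V * W1) + kron (A * B2) (V * W2)"
    using assms by (simp add: kron_mult)
  finally show ?thesis .
qed

lemma G3: assumes "A1 \<in> carrier_mat 4 4" "A2 \<in> carrier_mat 4 4" "B \<in> carrier_mat 4 4"
  "V1 \<in> carrier_mat N N" "V2 \<in> carrier_mat N N" "W \<in> carrier_mat N N"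
  shows "(kron A1 V1 + kron A2 V2) * kron B W = kron (A1 * B) (V1 * W) + kron (A2 * B) (V2 * W)"
proof -
  have "(kron A1 V1 + kron A2 V2) * kron B W = kron A1 V1 * kron B W + kron A2 V2 * kron B W"
    by (rule add_mult_distrib_mat[of _ "4*N" "4*N" _ _ "4*N"]) (use assms in simp_all)
  also have "\<dots> = kron (A1 * B) (V1 * W) + kron (A2 * B) (V2 * W)"
    using assms by (simp add: kron_mult)
  finally show ?thesis .
qed

lemma pauliX_carrier[simp]: "pauliX \<in> carrier_mat 2 2"
  by (rule carrier_matI) (simp_all add: pauliX_def mat_of_rows_list_def)
lemma XX_carrier[simp]: "kron pauliX pauliX \<in> carrier_mat 4 4"
  using kron_carrier[OF pauliX_carrier pauliX_carrier] by simp
lemma dagger_carrier[simp]: "R \<in> carrier_mat a b \<Longrightarrow> dagger R \<in> carrier_mat b a"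
  by (rule carrier_matI) (auto simp: dagger_def)
lemma dg4_carrier[simp]: "dg4 P \<in> carrier_mat 4 4" by (rule carrier_matI) simp_all
lemma ketbra_carrier[simp]: "ketbra m x \<in> carrier_mat (2^m) (2^m)" by (rule carrier_matI) simp_all
lemma flipmat_carrier[simp]: "flipmat m k \<in> carrier_mat (2^m) (2^m)" by (rule carrier_matI) simp_all
lemma proj0q_carrier[simp]: "proj0q m k \<in> carrier_mat (2^m) (2^m)" by (rule carrier_matI) simp_all

lemma qbit_flip0: "qbit m k (flipq m k 0) = 1"
  by (simp add: flipq_def qbit_def)

lemma Mt_gen:
  assumes km: "k < m" and R: "R \<in> carrier_mat 4 4" and \<sigma>: "\<sigma> \<in> carrier_mat 4 4"
  shows "Mt (Suc (Suc m)) R (Suc (Suc k)) * kron \<sigma> (proj_zeros m)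
       = kron (dagger R * (kron pauliX pauliX * (dg4 (\<lambda>s. s \<noteq> 3) * (kron pauliX pauliX * (R * \<sigma>))))) (proj_zeros m)"
proof -
  define N where "N = (2::nat)^m"
  define I where "I = (1\<^sub>m N :: complex mat)"
  define Z where "Z = ketbra m 0"
  define Z' where "Z' = ketbra m (flipq m k 0)"
  define F where "F = flipmat m k"
  define Q where "Q = proj0q m k"
  define XX where "XX = kron pauliX pauliX"
  define D0 where "D0 = dg4 (\<lambda>s. s \<noteq> 3)"
  define D1 where "D1 = dg4 (\<lambda>s. s = 3)"
  have cI: "I \<in> carrier_mat N N" and cZ: "Z \<in> carrier_mat N N" and cZ': "Z' \<in> carrier_mat N N"
    and cF: "F \<in> carrier_mat N N" and cQ: "Q \<in> carrier_mat N N"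
    by (simp_all add: I_def Z_def Z'_def F_def Q_def N_def)
  have cXX: "XX \<in> carrier_mat 4 4" and cD0: "D0 \<in> carrier_mat 4 4" and cD1: "D1 \<in> carrier_mat 4 4"
    and cRd: "dagger R \<in> carrier_mat 4 4" and c14: "1\<^sub>m 4 \<in> carrier_mat 4 4"
    using R by (simp_all add: XX_def D0_def D1_def)
  have fl0: "flipq m k 0 < 2^m" using flipq_lt[OF _ km, of 0] by simp
  have IZ: "I * Z = Z" using cZ by (simp add: I_def)
  have FZ: "F * Z = Z'" unfolding F_def Z_def Z'_def by (rule flip_ketbra) (use km in simp_all)
  have QZ: "Q * Z = Z" unfolding Q_def Z_def by (subst proj0q_ketbra) simp_all
  have QZ': "Q * Z' = 0\<^sub>m N N" unfolding Q_def Z'_def N_def by (subst proj0q_ketbra[OF fl0]) (simp add: qbit_flip0)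
  have IZ': "I * Z' = Z'" using cZ' by (simp add: I_def)
  have Mt_eq: "Mt (Suc (Suc m)) R (Suc (Suc k)) = kron (1\<^sub>m 4) Q * kron (dagger R) I * kron XX I * (kron D0 I + kron D1 F) * kron XX I * kron R I"
    unfolding Mt_def toffoli_decomp[OF km] proj0q_decomp[OF km] onsys_def by (simp add: I_def N_def Q_def XX_def D0_def D1_def F_def)
  have K: "proj_zeros m = Z" by (simp add: proj_zeros_ketbra Z_def)
  have s1: "kron R I * kron \<sigma> Z = kron (R * \<sigma>) Z"
    using carrier_matD[OF R] carrier_matD[OF \<sigma>] carrier_matD[OF cZ] carrier_matD[OF cI] by (simp add: kron_mult IZ)
  have s2: "kron XX I * kron (R * \<sigma>) Z = kron (XX * (R * \<sigma>)) Z"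
    using carrier_matD[OF R] carrier_matD[OF cXX] carrier_matD[OF cZ] carrier_matD[OF cI] by (simp add: kron_mult IZ)
  define \<tau> where "\<tau> = XX * (R * \<sigma>)"
  have c\<tau>: "\<tau> \<in> carrier_mat 4 4" using R \<sigma> cXX by (simp add: \<tau>_def)
  have s3: "(kron D0 I + kron D1 F) * kron \<tau> Z = kron (D0 * \<tau>) Z + kron (D1 * \<tau>) Z'"
    using G3[OF cD0 cD1 c\<tau> cI cF cZ] by (simp add: IZ FZ)
  have s4: "kron XX I * (kron (D0 * \<tau>) Z + kron (D1 * \<tau>) Z') = kron (XX * (D0 * \<tau>)) Z + kron (XX * (D1 * \<tau>)) Z'"
    using G2[OF cXX _ _ cZ cZ' cI] cD0 cD1 c\<tau> by (simp add: IZ IZ')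
  have s5: "kron (dagger R) I * (kron (XX * (D0 * \<tau>)) Z + kron (XX * (D1 * \<tau>)) Z')
       = kron (dagger R * (XX * (D0 * \<tau>))) Z + kron (dagger R * (XX * (D1 * \<tau>))) Z'"
    using G2[OF cRd _ _ cZ cZ' cI] cD0 cD1 c\<tau> cXX by (simp add: IZ IZ')
  define U where "U = dagger R * (XX * (D0 * \<tau>))"
  define V where "V = dagger R * (XX * (D1 * \<tau>))"
  have cU: "U \<in> carrier_mat 4 4" and cV: "V \<in> carrier_mat 4 4"
    using cRd cXX cD0 cD1 c\<tau> by (simp_all add: U_def V_def)
  have s6: "kron (1\<^sub>m 4) Q * (kron U Z + kron V Z') = kron U Z"
  proof -
    have "kron (1\<^sub>m 4) Q * (kron U Z + kron V Z') = kron (1\<^sub>m 4 * U) (Q * Z) + kron (1\<^sub>m 4 * V) (Q * Z')"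
      by (rule G2[OF c14 cU cV cZ cZ' cQ])
    also have "\<dots> = kron U Z + 0\<^sub>m (4 * N) (4 * N)"
      using cU cV by (simp add: QZ QZ' kron_zero_right)
    also have "\<dots> = kron U Z" using cU cZ by simp
    finally show ?thesis .
  qed
  have "Mt (Suc (Suc m)) R (Suc (Suc k)) * kron \<sigma> Z = kron (1\<^sub>m 4) Q * (kron (dagger R) I * (kron XX I * ((kron D0 I + kron D1 F) * (kron XX I * (kron R I * kron \<sigma> Z)))))"
    unfolding Mt_eq using carrier_matD[OF cI] carrier_matD[OF cZ] carrier_matD[OF cF] carrier_matD[OF cQ]
      carrier_matD[OF cXX] carrier_matD[OF cD0] carrier_matD[OF cD1] carrier_matD[OF cRd] carrier_matD[OF R] carrier_matD[OF \<sigma>]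
    by (simp add: assoc')
  also have "\<dots> = kron U Z"
    unfolding s1 s2 \<tau>_def[symmetric] s3 s4 s5 U_def[symmetric] V_def[symmetric] s6 ..
  finally show ?thesis unfolding K U_def \<tau>_def XX_def D0_def .
qed


lemma kron_add_left: assumes "A \<in> carrier_mat a b" "B \<in> carrier_mat a b"
  shows "kron (A + B) C = kron A C + kron B C"
proof (rule eq_matI)
  fix i j assume i: "i < dim_row (kron A C + kron B C)" and j: "j < dim_col (kron A C + kron B C)"
  have ad: "dim_row A = a" "dim_col A = b" "dim_row B = a" "dim_col B = b" using assms by auto
  have c1: "dim_row C > 0" using i by (cases "dim_row C") auto
  have c2: "dim_col C > 0" using j by (cases "dim_col C") auto
  have i1: "i div dim_row C < a" "j div dim_col C < b" using i j ad by (auto simp: less_mult_imp_div_less)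
  show "kron (A + B) C $$ (i,j) = (kron A C + kron B C) $$ (i,j)"
    using i j ad i1 c1 c2 by (simp add: index_kron algebra_simps)
qed (use assms in auto)

lemma kron_add_left': "dim_row A = dim_row B \<Longrightarrow> dim_col A = dim_col B \<Longrightarrow> kron A C + kron B C = kron (A + B) C"
  by (rule kron_add_left[symmetric]) (auto intro: carrier_matI)

lemma add_zero_left': "dim_row A = r \<Longrightarrow> dim_col A = c \<Longrightarrow> 0\<^sub>m r c + A = (A :: complex mat)"
  by (rule left_add_zero_mat) (rule cI)

lemma M1_gen:
  assumes km: "k < m" and \<tau>: "\<tau> \<in> carrier_mat 4 4"
  shows "M1 (Suc (Suc m)) (Suc (Suc k)) * kron \<tau> (proj_zeros m)
     = kron (dg4 (\<lambda>s. s div 2 \<noteq> 1) * (dg4 (\<lambda>s. s mod 2 \<noteq> 1) * \<tau>) + dg4 (\<lambda>s. s div 2 = 1) * (dg4 (\<lambda>s. s mod 2 = 1) * \<tau>)) (proj_zeros m)"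
proof -
  have d\<tau>: "dim_row \<tau> = 4" "dim_col \<tau> = 4" using \<tau> by auto
  have fl0: "flipq m k 0 < 2^m" using flipq_lt[OF _ km, of 0] by simp
  have ff: "flipq m k (flipq m k 0) = 0" by (simp add: flipq_def qbit_flip0) (simp add: qbit_def)
  show ?thesis
    unfolding M1_def cnot0_decomp[OF km] cnot1_decomp[OF km] proj0q_decomp[OF km] proj_zeros_ketbra
    using d\<tau> km fl0
    by (simp add: assoc' mult_add_distrib' add_mult_distrib' kron_mult flip_ketbra proj0q_ketbra qbit_flip0 ff
        kron_zero_right add_zero_right' add_zero_left' kron_add_left')
qed


lemma minus_mult_distrib': "dim_row A = dim_row B \<Longrightarrow> dim_col A = dim_col B \<Longrightarrow> dim_col A = dim_row C \<Longrightarrow>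
  (A - B) * C = A * C - B * (C :: complex mat)"
  by (rule minus_mult_distrib_mat[OF cI[OF refl refl]]) (auto intro: cI)

lemma one_mult': "dim_row A = n \<Longrightarrow> 1\<^sub>m n * A = (A :: complex mat)"
  by (rule left_mult_one_mat) (rule cI, auto)

lemma mult_zero': "dim_col A = r \<Longrightarrow> A * 0\<^sub>m r c = (0\<^sub>m (dim_row A) c :: complex mat)"
  by (rule right_mult_zero_mat) (rule cI, auto)

lemma Mb_gen:
  assumes km: "k < m" and km': "k' < m" and R: "R \<in> carrier_mat 4 4" and \<sigma>: "\<sigma> \<in> carrier_mat 4 4"
    and h1: "qbit m k' (flipq m k 0) = 0" and h3: "flipq m k (flipq m k' 0) < 2^m"
    and h4: "qbit m k' (flipq m k (flipq m k' 0)) = 1"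
  shows "Mb (Suc (Suc m)) R (Suc (Suc k)) (Suc (Suc k')) * kron \<sigma> (proj_zeros m)
     = kron \<sigma> (proj_zeros m) - kron (dagger R * (dg4 (\<lambda>s. s div 2 \<noteq> 1) * (dg4 (\<lambda>s. s mod 2 \<noteq> 1) * (R * \<sigma>)))) (proj_zeros m)"
proof -
  have d\<sigma>: "dim_row \<sigma> = 4" "dim_col \<sigma> = 4" using \<sigma> by auto
  have dR: "dim_row R = 4" "dim_col R = 4" using R by auto
  have dRd: "dim_row (dagger R) = 4" "dim_col (dagger R) = 4" using R by (auto simp: dagger_def)
  have fl0: "flipq m k 0 < 2^m" using flipq_lt[OF _ km, of 0] by simp
  have fl0': "flipq m k' 0 < 2^m" using flipq_lt[OF _ km', of 0] by simp
  show ?thesis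
    unfolding Mb_def cnot0_decomp[OF km] cnot1_decomp[OF km'] proj0q_decomp[OF km] proj0q_decomp[OF km'] proj_zeros_ketbra onsys_def
    using d\<sigma> dR dRd km km' fl0 fl0' h1 h3 h4
    by (simp add: assoc' mult_add_distrib' add_mult_distrib' kron_mult flip_ketbra proj0q_ketbra qbit_flip0
        kron_zero_right add_zero_right' add_zero_left' kron_add_left' minus_mult_distrib' one_mult' mult_zero')
qed


lemma mult4: "i < dim_row A \<Longrightarrow> j < dim_col B \<Longrightarrow> dim_row B = 4 \<Longrightarrow> dim_col A = 4 \<Longrightarrow>
  (A * B) $$ (i,j) = A$$(i,0)*B$$(0,j) + A$$(i,1)*B$$(1,j) + A$$(i,2)*B$$(2,j) + A$$(i,3)*B$$(3,j)"
  by (simp add: scalar_prod_def eval_nat_numeral row_def col_def)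

lemma four_cases: "(i::nat) < 4 \<Longrightarrow> i = 0 \<or> i = 1 \<or> i = 2 \<or> i = 3" by arith

lemma ket_simps[simp]:
  "dim_vec ket0 = 2" "dim_vec ket1 = 2" "dim_vec ketp = 2" "dim_vec ketm = 2"
  "ket0 $ 0 = 1" "ket0 $ 1 = 0" "ket1 $ 0 = 0" "ket1 $ 1 = 1"
  "ketp $ 0 = 1 / sqrt 2" "ketp $ 1 = 1 / sqrt 2" "ketm $ 0 = 1 / sqrt 2" "ketm $ 1 = - 1 / sqrt 2"
  "ket0 $ Suc 0 = 0" "ket1 $ Suc 0 = 1" "ketp $ Suc 0 = 1 / sqrt 2" "ketm $ Suc 0 = - 1 / sqrt 2"
  by (simp_all add: ket0_def ket1_def ketp_def ketm_def)

lemma m2_simps[simp]: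
  "dim_row (mat_of_rows_list 2 [[a,b],[c,d]]) = 2" "dim_col (mat_of_rows_list 2 [[a,b],[c,d]]) = 2"
  "mat_of_rows_list 2 [[a,b],[c,d]] $$ (0,0) = a" "mat_of_rows_list 2 [[a,b],[c,d]] $$ (0,1) = b"
  "mat_of_rows_list 2 [[a,b],[c,d]] $$ (1,0) = c" "mat_of_rows_list 2 [[a,b],[c,d]] $$ (1,1) = d"
  "mat_of_rows_list 2 [[a,b],[c,d]] $$ (0,Suc 0) = b"
  "mat_of_rows_list 2 [[a,b],[c,d]] $$ (Suc 0,0) = c" "mat_of_rows_list 2 [[a,b],[c,d]] $$ (Suc 0,Suc 0) = d"
  by (simp_all add: mat_of_rows_list_def)

lemma sq2c: "complex_of_real (sqrt 2) * complex_of_real (sqrt 2) = 2"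
proof -
  have "complex_of_real (sqrt 2 * sqrt 2) = 2" by simp
  thus ?thesis by (simp only: of_real_mult)
qed

lemma sc1c: "complex_of_real (sin x) * complex_of_real (sin x) = 1 - complex_of_real (cos x) * complex_of_real (cos x)"
proof -
  have "sin x * sin x = 1 - cos x * cos x" using sin_cos_squared_add3[of x] by linarith
  hence "complex_of_real (sin x * sin x) = complex_of_real (1 - cos x * cos x)" by simp
  thus ?thesis by simp
qed

lemma sc2c: "complex_of_real (sin x) * complex_of_real (sin x) + complex_of_real (cos x) * complex_of_real (cos x) = 1"
  "complex_of_real (cos x) * complex_of_real (cos x) + complex_of_real (sin x) * complex_of_real (sin x) = 1"
  by (simp_all add: sc1c)

lemma R_dims[simp]: "dim_row (R2 \<theta>) = 4" "dim_col (R2 \<theta>) = 4" "dim_row (R3 \<theta>) = 4" "dim_col (R3 \<theta>) = 4"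
  "dim_row (dagger A) = dim_col A" "dim_col (dagger A) = dim_row A"
  "dim_row hadamard = 2" "dim_col hadamard = 2" "dim_row pauliX = 2" "dim_col pauliX = 2"
  "dim_row (rotm \<theta>) = 2" "dim_col (rotm \<theta>) = 2"
  by (simp_all add: R2_def R3_def dagger_def hadamard_def pauliX_def rotm_def kron_def mat_of_rows_list_def)

lemma scK: "complex_of_real (cos x) * (complex_of_real (cos x) * k) + complex_of_real (sin x) * (complex_of_real (sin x) * k) = k"
proof -
  have "complex_of_real (cos x) * (complex_of_real (cos x) * k) + complex_of_real (sin x) * (complex_of_real (sin x) * k)
     = k * (complex_of_real (cos x) * complex_of_real (cos x) + complex_of_real (sin x) * complex_of_real (sin x))"
    by (simp add: algebra_simps)
  thus ?thesis by (simp only: sc2c mult_1_right)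
qed

lemma C3: "dg4 (\<lambda>s. s div 2 \<noteq> 1) * dg4 (\<lambda>s. s mod 2 \<noteq> 1) + dg4 (\<lambda>s. s div 2 = 1) * dg4 (\<lambda>s. s mod 2 = 1) = Omega1"
proof (rule eq_matI)
  fix i j assume "i < dim_row Omega1" "j < dim_col Omega1"
  hence i: "i < 4" and j: "j < 4" by (simp_all add: Omega1_def outer_def vkron_def)
  show "(dg4 (\<lambda>s. s div 2 \<noteq> 1) * dg4 (\<lambda>s. s mod 2 \<noteq> 1) + dg4 (\<lambda>s. s div 2 = 1) * dg4 (\<lambda>s. s mod 2 = 1)) $$ (i,j) = Omega1 $$ (i,j)"
    using four_cases[OF i] four_cases[OF j]
    by (elim disjE) (simp_all del: index_mult_mat(1) add: mult4 dg4_def Omega1_def outer_def vkron_def)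
qed (simp_all add: Omega1_def outer_def vkron_def)


lemma phi_simps[simp]: "dim_vec (phip \<theta>) = 2" "dim_vec (phim \<theta>) = 2"
  "phip \<theta> $ 0 = complex_of_real (cos \<theta>)" "phip \<theta> $ 1 = - complex_of_real (sin \<theta>)" "phip \<theta> $ Suc 0 = - complex_of_real (sin \<theta>)"
  "phim \<theta> $ 0 = complex_of_real (cos \<theta>)" "phim \<theta> $ 1 = complex_of_real (sin \<theta>)" "phim \<theta> $ Suc 0 = complex_of_real (sin \<theta>)"
  by (simp_all add: phip_def phim_def cos_of_real sin_of_real)

lemma Psi_simps[simp]: "dim_vec (Psi \<theta>) = 4"
  "Psi \<theta> $ 0 = complex_of_real (sin \<theta>)" "Psi \<theta> $ Suc 0 = 0" "Psi \<theta> $ 2 = 0" "Psi \<theta> $ 3 = complex_of_real (cos \<theta>)"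
  by (simp_all add: Psi_def vkron_def cos_of_real sin_of_real)

lemma Omega_prod: "Omega1 * Omega2 \<theta> * Omega3 \<theta> = outer (Psi \<theta>) (Psi \<theta>)"
proof (rule eq_matI)
  fix i j assume "i < dim_row (outer (Psi \<theta>) (Psi \<theta>))" "j < dim_col (outer (Psi \<theta>) (Psi \<theta>))"
  hence i: "i < 4" and j: "j < 4" by (simp_all add: outer_def)
  show "(Omega1 * Omega2 \<theta> * Omega3 \<theta>) $$ (i,j) = outer (Psi \<theta>) (Psi \<theta>) $$ (i,j)"
    using four_cases[OF i] four_cases[OF j]
    apply (elim disjE) 
    apply (simp_all del: index_mult_mat(1) add: mult4 Omega1_def Omega2_def Omega3_def outer_def vkron_def index_kron)
    apply (simp_all only: cos_of_real sin_of_real complex_cnj_complex_of_real mult.commute)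
    apply (simp_all add: sq2c)
    apply (simp_all add: field_simps)
    apply (simp_all only: scK)
    done
qed (simp_all add: outer_def Omega1_def vkron_def Omega3_def)


lemma mult2: "i < dim_row A \<Longrightarrow> j < dim_col B \<Longrightarrow> dim_row B = 2 \<Longrightarrow> dim_col A = 2 \<Longrightarrow>
  (A * B) $$ (i,j) = A$$(i,0)*B$$(0,j) + A$$(i,1)*B$$(1,j)"
  by (simp add: scalar_prod_def eval_nat_numeral row_def col_def)

lemmas csimps = mult4 mult2 dg4_def dagger_def R2_def R3_def index_kron hadamard_def rotm_def pauliX_def outer_def

lemma U2: "dagger (R2 \<theta>) * R2 \<theta> = 1\<^sub>m 4"
proof (rule eq_matI)
  fix i j assume "i < dim_row (1\<^sub>m 4 :: complex mat)" "j < dim_col (1\<^sub>m 4 :: complex mat)"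
  hence i: "i < 4" and j: "j < 4" by simp_all
  show "(dagger (R2 \<theta>) * R2 \<theta>) $$ (i,j) = (1\<^sub>m 4 :: complex mat) $$ (i,j)"
    using four_cases[OF i] four_cases[OF j]
    apply (elim disjE)
    apply (simp_all del: index_mult_mat(1) add: csimps cos_of_real sin_of_real)
    apply (simp_all add: sq2c field_simps)
    apply (simp_all only: scK sc2c)
    done
qed simp_all

lemma U3: "dagger (R3 \<theta>) * R3 \<theta> = 1\<^sub>m 4"
proof (rule eq_matI)
  fix i j assume "i < dim_row (1\<^sub>m 4 :: complex mat)" "j < dim_col (1\<^sub>m 4 :: complex mat)"
  hence i: "i < 4" and j: "j < 4" by simp_all
  show "(dagger (R3 \<theta>) * R3 \<theta>) $$ (i,j) = (1\<^sub>m 4 :: complex mat) $$ (i,j)"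
    using four_cases[OF i] four_cases[OF j]
    apply (elim disjE)
    apply (simp_all del: index_mult_mat(1) add: csimps cos_of_real sin_of_real)
    apply (simp_all add: sq2c field_simps)
    apply (simp_all only: scK sc2c)
    done
qed simp_all

lemma P2: "dagger (R2 \<theta>) * (dg4 (\<lambda>s. s div 2 \<noteq> 1) * (dg4 (\<lambda>s. s mod 2 \<noteq> 1) * R2 \<theta>)) = kron (outer ketp ketp) (outer (phip \<theta>) (phip \<theta>))"
proof (rule eq_matI)
  fix i j assume "i < dim_row (kron (outer ketp ketp) (outer (phip \<theta>) (phip \<theta>)))" "j < dim_col (kron (outer ketp ketp) (outer (phip \<theta>) (phip \<theta>)))"
  hence i: "i < 4" and j: "j < 4" by (simp_all add: outer_def)
  show "(dagger (R2 \<theta>) * (dg4 (\<lambda>s. s div 2 \<noteq> 1) * (dg4 (\<lambda>s. s mod 2 \<noteq> 1) * R2 \<theta>))) $$ (i,j) = kron (outer ketp ketp) (outer (phip \<theta>) (phip \<theta>)) $$ (i,j)"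
    using four_cases[OF i] four_cases[OF j]
    apply (elim disjE)
    apply (simp_all del: index_mult_mat(1) add: csimps cos_of_real sin_of_real)
    done
qed (simp_all add: outer_def)

lemma P3: "dagger (R3 \<theta>) * (dg4 (\<lambda>s. s div 2 \<noteq> 1) * (dg4 (\<lambda>s. s mod 2 \<noteq> 1) * R3 \<theta>)) = kron (outer ketm ketm) (outer (phim \<theta>) (phim \<theta>))"
proof (rule eq_matI)
  fix i j assume "i < dim_row (kron (outer ketm ketm) (outer (phim \<theta>) (phim \<theta>)))" "j < dim_col (kron (outer ketm ketm) (outer (phim \<theta>) (phim \<theta>)))"
  hence i: "i < 4" and j: "j < 4" by (simp_all add: outer_def)
  show "(dagger (R3 \<theta>) * (dg4 (\<lambda>s. s div 2 \<noteq> 1) * (dg4 (\<lambda>s. s mod 2 \<noteq> 1) * R3 \<theta>))) $$ (i,j) = kron (outer ketm ketm) (outer (phim \<theta>) (phim \<theta>)) $$ (i,j)"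
    using four_cases[OF i] four_cases[OF j]
    apply (elim disjE)
    apply (simp_all del: index_mult_mat(1) add: csimps cos_of_real sin_of_real)
    done
qed (simp_all add: outer_def)


lemma XXD: assumes "M \<in> carrier_mat 4 4"
  shows "kron pauliX pauliX * (dg4 (\<lambda>s. s \<noteq> 3) * (kron pauliX pauliX * M)) = M - dg4 (\<lambda>s. s div 2 \<noteq> 1) * (dg4 (\<lambda>s. s mod 2 \<noteq> 1) * M)"
proof (rule eq_matI)
  fix i j assume "i < dim_row (M - dg4 (\<lambda>s. s div 2 \<noteq> 1) * (dg4 (\<lambda>s. s mod 2 \<noteq> 1) * M))" "j < dim_col (M - dg4 (\<lambda>s. s div 2 \<noteq> 1) * (dg4 (\<lambda>s. s mod 2 \<noteq> 1) * M))"
  hence i: "i < 4" and j: "j < 4" using assms by simp_all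
  show "(kron pauliX pauliX * (dg4 (\<lambda>s. s \<noteq> 3) * (kron pauliX pauliX * M))) $$ (i,j) = (M - dg4 (\<lambda>s. s div 2 \<noteq> 1) * (dg4 (\<lambda>s. s mod 2 \<noteq> 1) * M)) $$ (i,j)"
    using four_cases[OF i] four_cases[OF j] assms
    by (elim disjE) (simp_all del: index_mult_mat(1) add: mult4 dg4_def index_kron pauliX_def dim_row_mat)
qed (use assms in \<open>simp_all add: pauliX_def dim_row_mat\<close>)


lemma mult_minus_distrib': "dim_row B = dim_row C \<Longrightarrow> dim_col B = dim_col C \<Longrightarrow> dim_col A = dim_row B \<Longrightarrow>
  A * (B - C) = A * B - A * (C :: complex mat)"
  by (rule mult_minus_distrib_mat[OF cI[OF refl refl]]) (auto intro: cI)

lemma kron_minus_left: assumes "dim_row A = dim_row B" "dim_col A = dim_col B"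
  shows "kron A C - kron B C = kron (A - B) C"
proof (rule eq_matI)
  fix i j assume i: "i < dim_row (kron (A - B) C)" and j: "j < dim_col (kron (A - B) C)"
  have c1: "dim_row C > 0" using i by (cases "dim_row C") auto
  have c2: "dim_col C > 0" using j by (cases "dim_col C") auto
  have i1: "i div dim_row C < dim_row B" "j div dim_col C < dim_col B" using i j assms by (auto simp: less_mult_imp_div_less)
  show "(kron A C - kron B C) $$ (i,j) = kron (A - B) C $$ (i,j)"
    using i j assms i1 c1 c2 by (simp add: index_kron algebra_simps)
qed (use assms in auto)

abbreviation "A0 \<equiv> dg4 (\<lambda>s. s div 2 \<noteq> 1)"
abbreviation "B0 \<equiv> dg4 (\<lambda>s. s mod 2 \<noteq> 1)"

lemma actb: assumes R: "R \<in> carrier_mat 4 4" and \<sigma>: "\<sigma> \<in> carrier_mat 4 4"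
  shows "\<sigma> - dagger R * (A0 * (B0 * (R * \<sigma>))) = (1\<^sub>m 4 - dagger R * (A0 * (B0 * R))) * \<sigma>"
proof -
  have d: "dim_row R = 4" "dim_col R = 4" "dim_row \<sigma> = 4" "dim_col \<sigma> = 4" using R \<sigma> by auto
  show ?thesis using d by (simp add: minus_mult_distrib' one_mult' assoc')
qed

lemma acta: assumes R: "R \<in> carrier_mat 4 4" and \<sigma>: "\<sigma> \<in> carrier_mat 4 4" and U: "dagger R * R = 1\<^sub>m 4"
  shows "dagger R * (kron pauliX pauliX * (dg4 (\<lambda>s. s \<noteq> 3) * (kron pauliX pauliX * (R * \<sigma>)))) = (1\<^sub>m 4 - dagger R * (A0 * (B0 * R))) * \<sigma>"
proof -
  have d: "dim_row R = 4" "dim_col R = 4" "dim_row \<sigma> = 4" "dim_col \<sigma> = 4" using R \<sigma> by auto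
  have c: "R * \<sigma> \<in> carrier_mat 4 4" using R \<sigma> by simp
  have U': "dagger R * (R * \<sigma>) = \<sigma>"
  proof -
    have "dagger R * (R * \<sigma>) = (dagger R * R) * \<sigma>" using d by (simp add: assoc')
    also have "\<dots> = \<sigma>" using U d by (simp add: one_mult')
    finally show ?thesis .
  qed
  have "dagger R * (kron pauliX pauliX * (dg4 (\<lambda>s. s \<noteq> 3) * (kron pauliX pauliX * (R * \<sigma>))))
      = dagger R * (R * \<sigma> - A0 * (B0 * (R * \<sigma>)))" by (simp only: XXD[OF c])
  also have "\<dots> = \<sigma> - dagger R * (A0 * (B0 * (R * \<sigma>)))"
    using d by (simp add: mult_minus_distrib' U')
  also have "\<dots> = (1\<^sub>m 4 - dagger R * (A0 * (B0 * R))) * \<sigma>" by (rule actb[OF R \<sigma>])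
  finally show ?thesis .
qed

lemma R2c: "R2 \<theta> \<in> carrier_mat 4 4" by (rule carrier_matI) simp_all
lemma R3c: "R3 \<theta> \<in> carrier_mat 4 4" by (rule carrier_matI) simp_all

lemma Om2: "Omega2 \<theta> = 1\<^sub>m 4 - dagger (R2 \<theta>) * (A0 * (B0 * R2 \<theta>))"
  unfolding Omega2_def P2 ..
lemma Om3: "Omega3 \<theta> = 1\<^sub>m 4 - dagger (R3 \<theta>) * (A0 * (B0 * R3 \<theta>))"
  unfolding Omega3_def P3 ..

lemma Om_carrier: "Omega1 \<in> carrier_mat 4 4" "Omega2 \<theta> \<in> carrier_mat 4 4" "Omega3 \<theta> \<in> carrier_mat 4 4"
  by (rule carrier_matI; simp add: Omega1_def Omega2_def Omega3_def outer_def vkron_def phip_def phim_def)+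

lemma Mt_R2: assumes "k < m" "\<sigma> \<in> carrier_mat 4 4"
  shows "Mt (Suc (Suc m)) (R2 \<theta>) (Suc (Suc k)) * kron \<sigma> (proj_zeros m) = kron (Omega2 \<theta> * \<sigma>) (proj_zeros m)"
  unfolding Mt_gen[OF assms(1) R2c assms(2)] acta[OF R2c assms(2) U2] Om2 ..

lemma Mt_R3: assumes "k < m" "\<sigma> \<in> carrier_mat 4 4"
  shows "Mt (Suc (Suc m)) (R3 \<theta>) (Suc (Suc k)) * kron \<sigma> (proj_zeros m) = kron (Omega3 \<theta> * \<sigma>) (proj_zeros m)"
  unfolding Mt_gen[OF assms(1) R3c assms(2)] acta[OF R3c assms(2) U3] Om3 ..

lemma Mb_R: assumes km: "k < m" and km': "k' < m" and R: "R \<in> carrier_mat 4 4" and \<sigma>: "\<sigma> \<in> carrier_mat 4 4"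
    and h1: "qbit m k' (flipq m k 0) = 0" and h3: "flipq m k (flipq m k' 0) < 2^m"
    and h4: "qbit m k' (flipq m k (flipq m k' 0)) = 1"
  shows "Mb (Suc (Suc m)) R (Suc (Suc k)) (Suc (Suc k')) * kron \<sigma> (proj_zeros m)
     = kron ((1\<^sub>m 4 - dagger R * (A0 * (B0 * R))) * \<sigma>) (proj_zeros m)"
proof -
  have d: "dim_row R = 4" "dim_col R = 4" "dim_row \<sigma> = 4" "dim_col \<sigma> = 4" using R \<sigma> by auto
  show ?thesis
    unfolding Mb_gen[OF km km' R \<sigma> h1 h3 h4] actb[OF R \<sigma>, symmetric]
    by (rule kron_minus_left) (use d in simp_all)
qed

lemma M1_R: assumes km: "k < m" and \<tau>: "\<tau> \<in> carrier_mat 4 4"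
  shows "M1 (Suc (Suc m)) (Suc (Suc k)) * kron \<tau> (proj_zeros m) = kron (Omega1 * \<tau>) (proj_zeros m)"
proof -
  have d: "dim_row \<tau> = 4" "dim_col \<tau> = 4" using \<tau> by auto
  have "dg4 (\<lambda>s. s div 2 \<noteq> 1) * (dg4 (\<lambda>s. s mod 2 \<noteq> 1) * \<tau>) + dg4 (\<lambda>s. s div 2 = 1) * (dg4 (\<lambda>s. s mod 2 = 1) * \<tau>)
     = (dg4 (\<lambda>s. s div 2 \<noteq> 1) * dg4 (\<lambda>s. s mod 2 \<noteq> 1) + dg4 (\<lambda>s. s div 2 = 1) * dg4 (\<lambda>s. s mod 2 = 1)) * \<tau>"
    using d by (simp add: add_mult_distrib' assoc')
  thus ?thesis unfolding M1_gen[OF km \<tau>] C3 by simp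
qed


lemma dims_ops[simp]:
  "dim_row (M1 n a) = 2^n" "dim_col (M1 n a) = 2^n"
  "dim_row (Mt n R a) = 2^n"
  "dim_row (Mb n R a a') = 2^n"
  "dim_row (proj_zeros m) = 2^m" "dim_col (proj_zeros m) = 2^m"
  by (simp_all add: M1_def Mt_def Mb_def cnot_def onsys_def proj_zeros_def)

lemma dim_col_Mb[simp]: "dim_col (Mb n R a a') = dim_col R * 2^(n-2)"
  by (simp add: Mb_def onsys_def)

lemma dim_col_Mt[simp]: "dim_col (Mt n R a) = dim_col R * 2^(n-2)"
proof -
  have "dim_col (Mt n R a) = dim_col (onsys n R)" by (simp add: Mt_def)
  thus ?thesis by (simp add: onsys_def)
qed

theorem mainTheorem5:
  fixes \<theta> :: real
  assumes "0 < \<theta>" and "\<theta> < pi / 4"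
  shows
    "(\<forall>\<sigma> \<in> carrier_mat 4 4.
        Mt 3 (R2 \<theta>) 2 * kron \<sigma> (proj_zeros 1) = kron (Omega2 \<theta> * \<sigma>) (proj_zeros 1)
      \<and> Mt 3 (R3 \<theta>) 2 * kron \<sigma> (proj_zeros 1) = kron (Omega3 \<theta> * \<sigma>) (proj_zeros 1))
   \<and> Omega1 * Omega2 \<theta> * Omega3 \<theta> = outer (Psi \<theta>) (Psi \<theta>)
   \<and> (\<forall>\<sigma> \<in> carrier_mat 4 4.
        M1 5 2 * Mt 5 (R2 \<theta>) 3 * Mt 5 (R3 \<theta>) 4 * kron \<sigma> (proj_zeros 3)
          = kron (outer (Psi \<theta>) (Psi \<theta>) * \<sigma>) (proj_zeros 3))
   \<and> (\<forall>\<sigma> \<in> carrier_mat 4 4.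
        Mb 4 (R2 \<theta>) 2 3 * kron \<sigma> (proj_zeros 2) = kron (Omega2 \<theta> * \<sigma>) (proj_zeros 2)
      \<and> Mb 4 (R3 \<theta>) 2 3 * kron \<sigma> (proj_zeros 2) = kron (Omega3 \<theta> * \<sigma>) (proj_zeros 2))
   \<and> (\<forall>\<sigma> \<in> carrier_mat 4 4.
        M1 7 2 * Mb 7 (R2 \<theta>) 3 4 * Mb 7 (R3 \<theta>) 5 6 * kron \<sigma> (proj_zeros 5)
          = kron (outer (Psi \<theta>) (Psi \<theta>) * \<sigma>) (proj_zeros 5))"
proof (intro conjI ballI)
  show "Omega1 * Omega2 \<theta> * Omega3 \<theta> = outer (Psi \<theta>) (Psi \<theta>)" by (rule Omega_prod)
next
  have n3: "(3::nat) = Suc (Suc 1)" and n2: "(2::nat) = Suc (Suc 0)" and n4: "(4::nat) = Suc (Suc 2)"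
    and n5: "(5::nat) = Suc (Suc 3)" and n6: "(6::nat) = Suc (Suc 4)" and n7: "(7::nat) = Suc (Suc 5)" by simp_all
  have O1: "Omega1 \<in> carrier_mat 4 4" and O2: "Omega2 \<theta> \<in> carrier_mat 4 4" and O3: "Omega3 \<theta> \<in> carrier_mat 4 4"
    by (rule Om_carrier)+
  fix \<sigma> :: "complex mat" assume \<sigma>: "\<sigma> \<in> carrier_mat 4 4"
  have d\<sigma>: "dim_row \<sigma> = 4" "dim_col \<sigma> = 4" using \<sigma> by auto
  have dO: "dim_row Omega1 = 4" "dim_col Omega1 = 4" "dim_row (Omega2 \<theta>) = 4" "dim_col (Omega2 \<theta>) = 4"
     "dim_row (Omega3 \<theta>) = 4" "dim_col (Omega3 \<theta>) = 4" using O1 O2 O3 by auto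
  have dR: "dim_col (R2 \<theta>) = 4" "dim_col (R3 \<theta>) = 4" by simp_all
  have P: "Omega1 * (Omega2 \<theta> * (Omega3 \<theta> * \<sigma>)) = outer (Psi \<theta>) (Psi \<theta>) * \<sigma>"
  proof -
    have "Omega1 * (Omega2 \<theta> * (Omega3 \<theta> * \<sigma>)) = Omega1 * Omega2 \<theta> * Omega3 \<theta> * \<sigma>"
      using d\<sigma> dO by (simp add: assoc')
    thus ?thesis by (simp only: Omega_prod)
  qed
  show "Mt 3 (R2 \<theta>) 2 * kron \<sigma> (proj_zeros 1) = kron (Omega2 \<theta> * \<sigma>) (proj_zeros 1)"
    using Mt_R2[of 0 1 \<sigma> \<theta>] \<sigma> by (simp only: n7[symmetric] n6[symmetric] n5[symmetric] n4[symmetric] n3[symmetric] n2[symmetric] simp_thms zero_less_Suc)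
  show "Mt 3 (R3 \<theta>) 2 * kron \<sigma> (proj_zeros 1) = kron (Omega3 \<theta> * \<sigma>) (proj_zeros 1)"
    using Mt_R3[of 0 1 \<sigma> \<theta>] \<sigma> by (simp only: n7[symmetric] n6[symmetric] n5[symmetric] n4[symmetric] n3[symmetric] n2[symmetric] simp_thms zero_less_Suc)
  show "Mb 4 (R2 \<theta>) 2 3 * kron \<sigma> (proj_zeros 2) = kron (Omega2 \<theta> * \<sigma>) (proj_zeros 2)"
  proof -
    have "Mb (Suc (Suc 2)) (R2 \<theta>) (Suc (Suc 0)) (Suc (Suc 1)) * kron \<sigma> (proj_zeros 2) = kron (Omega2 \<theta> * \<sigma>) (proj_zeros 2)"
      unfolding Om2 by (rule Mb_R[OF _ _ R2c \<sigma>]) (simp_all add: qbit_def flipq_def)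
    thus ?thesis by (simp only: n7[symmetric] n6[symmetric] n5[symmetric] n4[symmetric] n3[symmetric] n2[symmetric])
  qed
  show "Mb 4 (R3 \<theta>) 2 3 * kron \<sigma> (proj_zeros 2) = kron (Omega3 \<theta> * \<sigma>) (proj_zeros 2)"
  proof -
    have "Mb (Suc (Suc 2)) (R3 \<theta>) (Suc (Suc 0)) (Suc (Suc 1)) * kron \<sigma> (proj_zeros 2) = kron (Omega3 \<theta> * \<sigma>) (proj_zeros 2)"
      unfolding Om3 by (rule Mb_R[OF _ _ R3c \<sigma>]) (simp_all add: qbit_def flipq_def)
    thus ?thesis by (simp only: n7[symmetric] n6[symmetric] n5[symmetric] n4[symmetric] n3[symmetric] n2[symmetric])
  qed
  show "M1 5 2 * Mt 5 (R2 \<theta>) 3 * Mt 5 (R3 \<theta>) 4 * kron \<sigma> (proj_zeros 3) = kron (outer (Psi \<theta>) (Psi \<theta>) * \<sigma>) (proj_zeros 3)"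
  proof -
    have s3: "Mt (Suc (Suc 3)) (R3 \<theta>) (Suc (Suc 2)) * kron \<sigma> (proj_zeros 3) = kron (Omega3 \<theta> * \<sigma>) (proj_zeros 3)"
      by (rule Mt_R3) (simp_all add: \<sigma>)
    have c3: "Omega3 \<theta> * \<sigma> \<in> carrier_mat 4 4" using O3 \<sigma> by simp
    have s2: "Mt (Suc (Suc 3)) (R2 \<theta>) (Suc (Suc 1)) * kron (Omega3 \<theta> * \<sigma>) (proj_zeros 3) = kron (Omega2 \<theta> * (Omega3 \<theta> * \<sigma>)) (proj_zeros 3)"
      by (rule Mt_R2) (simp_all add: c3)
    have c2: "Omega2 \<theta> * (Omega3 \<theta> * \<sigma>) \<in> carrier_mat 4 4" using O2 c3 by simp
    have s1: "M1 (Suc (Suc 3)) (Suc (Suc 0)) * kron (Omega2 \<theta> * (Omega3 \<theta> * \<sigma>)) (proj_zeros 3) = kron (Omega1 * (Omega2 \<theta> * (Omega3 \<theta> * \<sigma>))) (proj_zeros 3)"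
      by (rule M1_R) (simp_all add: c2)
    have "M1 5 2 * Mt 5 (R2 \<theta>) 3 * Mt 5 (R3 \<theta>) 4 * kron \<sigma> (proj_zeros 3) = M1 5 2 * (Mt 5 (R2 \<theta>) 3 * (Mt 5 (R3 \<theta>) 4 * kron \<sigma> (proj_zeros 3)))"
      using d\<sigma> dR by (simp add: assoc')
    also have "\<dots> = kron (Omega1 * (Omega2 \<theta> * (Omega3 \<theta> * \<sigma>))) (proj_zeros 3)"
      using s1 s2 s3 by (simp only: n7[symmetric] n6[symmetric] n5[symmetric] n4[symmetric] n3[symmetric] n2[symmetric])
    finally show ?thesis unfolding P .
  qed
  show "M1 7 2 * Mb 7 (R2 \<theta>) 3 4 * Mb 7 (R3 \<theta>) 5 6 * kron \<sigma> (proj_zeros 5) = kron (outer (Psi \<theta>) (Psi \<theta>) * \<sigma>) (proj_zeros 5)"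
  proof -
    have s3: "Mb (Suc (Suc 5)) (R3 \<theta>) (Suc (Suc 3)) (Suc (Suc 4)) * kron \<sigma> (proj_zeros 5) = kron (Omega3 \<theta> * \<sigma>) (proj_zeros 5)"
      unfolding Om3 by (rule Mb_R[OF _ _ R3c \<sigma>]) (simp_all add: qbit_def flipq_def)
    have c3: "Omega3 \<theta> * \<sigma> \<in> carrier_mat 4 4" using O3 \<sigma> by simp
    have s2: "Mb (Suc (Suc 5)) (R2 \<theta>) (Suc (Suc 1)) (Suc (Suc 2)) * kron (Omega3 \<theta> * \<sigma>) (proj_zeros 5) = kron (Omega2 \<theta> * (Omega3 \<theta> * \<sigma>)) (proj_zeros 5)"
      unfolding Om2 by (rule Mb_R[OF _ _ R2c c3]) (simp_all add: qbit_def flipq_def)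
    have c2: "Omega2 \<theta> * (Omega3 \<theta> * \<sigma>) \<in> carrier_mat 4 4" using O2 c3 by simp
    have s1: "M1 (Suc (Suc 5)) (Suc (Suc 0)) * kron (Omega2 \<theta> * (Omega3 \<theta> * \<sigma>)) (proj_zeros 5) = kron (Omega1 * (Omega2 \<theta> * (Omega3 \<theta> * \<sigma>))) (proj_zeros 5)"
      by (rule M1_R) (simp_all add: c2)
    have "M1 7 2 * Mb 7 (R2 \<theta>) 3 4 * Mb 7 (R3 \<theta>) 5 6 * kron \<sigma> (proj_zeros 5) = M1 7 2 * (Mb 7 (R2 \<theta>) 3 4 * (Mb 7 (R3 \<theta>) 5 6 * kron \<sigma> (proj_zeros 5)))"
      using d\<sigma> by (simp add: assoc')
    also have "\<dots> = kron (Omega1 * (Omega2 \<theta> * (Omega3 \<theta> * \<sigma>))) (proj_zeros 5)"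
      using s1 s2 s3 by (simp only: n7[symmetric] n6[symmetric] n5[symmetric] n4[symmetric] n3[symmetric] n2[symmetric])
    finally show ?thesis unfolding P .
  qed
qed


end
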